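(* Let $n\ge 2$, $k\ge 2$ and let $G=W(n,k)$ be the windmill graph. Then for every integer $r\ge 2$, $\varphi(G^r)=\frac{1}{2}k(n-1)\bigl(k(n-1)-1\bigr)$.
   Context: All graphs are finite, simple and without isolated vertices. $\mathbb{N}_0$ denotes the set of non-negative integers; for finite $A,B\subseteq\mathbb{N}_0$, $A+B=\{a+b: a\in A, b\in B\}$. An integer additive set-indexer (IASI) of a graph $G$ is an injective map $f$ from $V(G)$ to the finite non-empty subsets of $\mathbb{N}_0$ such that the induced edge map $f^+(uv)=f(u)+f(v)$ is injective on $E(G)$. A weak IASI (WIASI) is an IASI $f$ with $|f^+(uv)|=\max(|f(u)|,|f(v)|)$ for every edge $uv$ (equivalently, for every edge at least one end vertex has a singleton label). A vertex or edge is mono-indexed if its set-label has cardinality $1$. Every graph admits a WIASI. The sparing number $\varphi(G)$ is the minimum, over all WIASIs of $G$, of the number of mono-indexed edges of $G$. The $r$-th power $G^r$ has vertex set $V(G)$, two distinct vertices being adjacent iff their distance in $G$ is at most $r$. The windmill graph $W(n,k)$ is obtained from $k$ copies of the complete graph $K_n$ by identifying one vertex from each copy into a single shared vertex. *)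

theory Defs
  imports Main
begin

text \<open>A finite simple graph is given by a vertex set V and a set E of 2-element
subsets of V (undirected edges).\<close>

definition edge_label :: "('a \<Rightarrow> nat set) \<Rightarrow> 'a set \<Rightarrow> nat set" where
  "edge_label f e = {a + b | a b u v. e = {u, v} \<and> u \<noteq> v \<and> a \<in> f u \<and> b \<in> f v}"

definition is_IASI :: "'a set \<Rightarrow> 'a set set \<Rightarrow> ('a \<Rightarrow> nat set) \<Rightarrow> bool" where
  "is_IASI V E f \<longleftrightarrow>
     (\<forall>v\<in>V. finite (f v) \<and> f v \<noteq> {}) \<and> inj_on f V \<and> inj_on (edge_label f) E"

definition is_WIASI :: "'a set \<Rightarrow> 'a set set \<Rightarrow> ('a \<Rightarrow> nat set) \<Rightarrow> bool" where
  "is_WIASI V E f \<longleftrightarrow> is_IASI V E f \<and>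
     (\<forall>u v. {u, v} \<in> E \<longrightarrow> card (edge_label f {u, v}) = max (card (f u)) (card (f v)))"

definition mono_edges :: "'a set set \<Rightarrow> ('a \<Rightarrow> nat set) \<Rightarrow> nat" where
  "mono_edges E f = card {e \<in> E. card (edge_label f e) = 1}"

definition sparing_number :: "'a set \<Rightarrow> 'a set set \<Rightarrow> nat" where
  "sparing_number V E = Min {mono_edges E f | f. is_WIASI V E f}"

fun reach :: "'a set set \<Rightarrow> nat \<Rightarrow> 'a \<Rightarrow> 'a \<Rightarrow> bool" where
  "reach E 0 u v = (u = v)"
| "reach E (Suc m) u v = (reach E m u v \<or> (\<exists>w. reach E m u w \<and> {w, v} \<in> E))"

definition power_edges :: "'a set \<Rightarrow> 'a set set \<Rightarrow> nat \<Rightarrow> 'a set set" where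
  "power_edges V E r = {{u, v} | u v. u \<in> V \<and> v \<in> V \<and> u \<noteq> v \<and> reach E r u v}"

text \<open>Windmill W(n,k): shared vertex (0,0); copy i (1\<le>i\<le>k) of K_n consists of
 (0,0) together with (i,j), 1\<le>j\<le>n-1.\<close>
definition windmill_V :: "nat \<Rightarrow> nat \<Rightarrow> (nat \<times> nat) set" where
  "windmill_V n k = insert (0, 0) ({1..k} \<times> {1..n - 1})"

definition windmill_E :: "nat \<Rightarrow> nat \<Rightarrow> (nat \<times> nat) set set" where
  "windmill_E n k = {{x, y} | x y i. i \<in> {1..k} \<and>
      x \<in> insert (0, 0) ({i} \<times> {1..n - 1}) \<and> y \<in> insert (0, 0) ({i} \<times> {1..n - 1}) \<and> x \<noteq> y}"

end

theory Submission imports Defs begin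
unbundle bit_operations_syntax

lemma bit2: "a \<noteq> b \<Longrightarrow> bit ((2::nat)^a + 2^b) i \<longleftrightarrow> i = a \<or> i = b"
proof -
  assume "a \<noteq> b"
  then have "(2::nat)^a AND 2^b = 0" by (auto intro: bit_eqI simp: bit_and_iff bit_exp_iff)
  then have "(2::nat)^a + 2^b = 2^a OR 2^b" by (rule disjunctive_add_eq_or)
  then show ?thesis by (simp add: bit_or_iff bit_exp_iff)
qed

lemma pow2_sidon: assumes "a \<noteq> b" "c \<noteq> d" "(2::nat)^a + 2^b = 2^c + 2^d" shows "{a,b} = {c,d}"
proof -
  have "\<And>i. (i = a \<or> i = b) \<longleftrightarrow> (i = c \<or> i = d)" using bit2[OF assms(1)] bit2[OF assms(2)] assms(3) by metis
  then show ?thesis by blast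
qed

definition sums :: "nat set \<Rightarrow> nat set \<Rightarrow> nat set" where
  "sums A B = {a+b|a b. a \<in> A \<and> b \<in> B}"

lemma edge_label_pair: "u \<noteq> v \<Longrightarrow> edge_label f {u,v} = sums (f u) (f v)"
  unfolding edge_label_def sums_def
  by (auto simp: doubleton_eq_iff) (metis add.commute)+

lemma sums_image: "sums A B = (\<lambda>(a,b). a+b) ` (A \<times> B)"
  unfolding sums_def by auto

lemma sums_finite: "finite A \<Longrightarrow> finite B \<Longrightarrow> finite (sums A B)"
  by (simp add: sums_image)

lemma sums_comm: "sums A B = sums B A"
  unfolding sums_def using add.commute by blast

lemma sums_ge1: assumes "finite A" "finite B" "B \<noteq> {}" shows "card A \<le> card (sums A B)"
proof -
  have "Min B \<in> B" using assms by simp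
  then have "(\<lambda>a. a + Min B) ` A \<subseteq> sums A B" unfolding sums_def by blast
  moreover have "card ((\<lambda>a. a + Min B) ` A) = card A" by (simp add: card_image inj_on_def)
  ultimately show ?thesis using card_mono sums_finite assms by metis
qed

lemma sums_gt: assumes "finite A" "finite B" "card A \<ge> 2" "card B \<ge> 2"
  shows "card A < card (sums A B)"
proof -
  have ne: "A \<noteq> {}" "B \<noteq> {}" using assms by auto
  have sub: "B \<subseteq> {Min B}" if h: "Max B \<le> Min B"
  proof
    fix b assume "b \<in> B"
    then have "Min B \<le> b" "b \<le> Max B" using assms(2) by simp_all
    then show "b \<in> {Min B}" using h by simp
  qed
  have lt: "Min B < Max B"
  proof (rule ccontr)
    assume "\<not> Min B < Max B"
    then have "card B \<le> card {Min B}" using sub card_mono by (metis finite.emptyI finite_insert not_less)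
    then show False using assms(4) by simp
  qed
  let ?S = "insert (Max A + Max B) ((\<lambda>a. a + Min B) ` A)"
  have mm: "Max A \<in> A" "Max B \<in> B" "Min B \<in> B" using assms ne by simp_all
  have sub: "?S \<subseteq> sums A B" using mm unfolding sums_def by blast
  have nin: "Max A + Max B \<notin> (\<lambda>a. a + Min B) ` A"
  proof
    assume "Max A + Max B \<in> (\<lambda>a. a + Min B) ` A"
    then obtain a where "a \<in> A" "Max A + Max B = a + Min B" by auto
    moreover have "a \<le> Max A" using \<open>a \<in> A\<close> assms by simp
    ultimately show False using lt by simp
  qed
  have "card ?S = card A + 1" using nin assms by (simp add: card_image inj_on_def)
  then show ?thesis using card_mono[OF sums_finite[OF assms(1,2)] sub] by simp
qed

lemma sums_card1: assumes "finite A" "finite B" "A \<noteq> {}" "B \<noteq> {}"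
  shows "card (sums A B) = 1 \<longleftrightarrow> card A = 1 \<and> card B = 1"
proof
  assume h: "card (sums A B) = 1"
  have "card A \<le> 1" using sums_ge1[OF assms(1,2,4)] h by simp
  moreover have "card B \<le> 1" using sums_ge1[OF assms(2,1,3)] h sums_comm by metis
  ultimately show "card A = 1 \<and> card B = 1" using assms by (simp add: le_Suc_eq card_gt_0_iff)
next
  assume "card A = 1 \<and> card B = 1"
  then obtain a b where "A = {a}" "B = {b}" by (meson card_1_singletonE)
  then have "sums A B = {a+b}" unfolding sums_def by auto
  then show "card (sums A B) = 1" by simp
qed

definition P :: "'a set \<Rightarrow> 'a set set" where
  "P V = {{u,v}|u v. u \<in> V \<and> v \<in> V \<and> u \<noteq> v}"

lemma P_eq: "P V = {B. B \<subseteq> V \<and> card B = 2}"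
  unfolding P_def by (auto simp: card_2_iff)

lemma card_P: "finite V \<Longrightarrow> card (P V) = card V choose 2"
  by (simp add: P_eq n_subsets)

lemma finite_P: "finite V \<Longrightarrow> finite (P V)"
  unfolding P_eq by (simp add: finite_subset)

lemma mono_set:
  assumes "\<forall>v\<in>V. finite (f v) \<and> f v \<noteq> {}"
  shows "{e \<in> P V. card (edge_label f e) = 1} = P {v\<in>V. card (f v) = 1}"
proof -
  have "\<And>u v. u \<in> V \<Longrightarrow> v \<in> V \<Longrightarrow> u \<noteq> v \<Longrightarrow> card (edge_label f {u,v}) = 1 \<longleftrightarrow> card (f u) = 1 \<and> card (f v) = 1"
    using assms by (metis edge_label_pair sums_card1)
  then show ?thesis unfolding P_def by auto
qed

lemma P_mem: "{u,v} \<in> P V \<Longrightarrow> u \<in> V \<and> v \<in> V \<and> u \<noteq> v"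
  unfolding P_eq by (auto simp: card_2_iff doubleton_eq_iff)

lemma P_memI: "u \<in> V \<Longrightarrow> v \<in> V \<Longrightarrow> u \<noteq> v \<Longrightarrow> {u,v} \<in> P V"
  unfolding P_def by blast

lemma choose2_mono: "(a::nat) \<le> b \<Longrightarrow> a choose 2 \<le> b choose 2"
  unfolding choose_two by (intro div_le_mono mult_le_mono diff_le_mono) auto

lemma mono_edges_P:
  assumes "finite V" "\<forall>v\<in>V. finite (f v) \<and> f v \<noteq> {}"
  shows "mono_edges (P V) f = card {v\<in>V. card (f v) = 1} choose 2"
proof -
  have "finite {v\<in>V. card (f v) = 1}" using assms(1) by simp
  then show ?thesis unfolding mono_edges_def using mono_set[OF assms(2)] card_P by metis
qed

lemma WIASI_lower:
  assumes "finite V" "is_WIASI V (P V) f"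
  shows "card V - 1 \<le> card {v\<in>V. card (f v) = 1}"
proof (rule ccontr)
  let ?S = "{v\<in>V. card (f v) = 1}"
  assume "\<not> ?thesis"
  then have c: "card (V - ?S) \<ge> 2" using card_Diff_subset[of ?S V] assms(1) card_mono[of V ?S] by (simp add: finite_subset)
  then obtain u where u: "u \<in> V - ?S" by (metis all_not_in_conv card.empty not_numeral_le_zero)
  have "card (V - ?S - {u}) \<ge> 1" using c u assms(1) by (simp add: card_Diff_singleton)
  then obtain v where v: "v \<in> V - ?S - {u}" by (metis all_not_in_conv card.empty not_one_le_zero)
  have fin: "\<forall>v\<in>V. finite (f v) \<and> f v \<noteq> {}" using assms(2) unfolding is_WIASI_def is_IASI_def by blast
  have cu: "card (f u) \<ge> 2" using u fin by (auto simp: card_gt_0_iff dest: spec[of _ u] ) (metis One_nat_def Suc_1 card_gt_0_iff Suc_leI le_neq_implies_less)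
  have cv: "card (f v) \<ge> 2" using v fin by (auto simp: card_gt_0_iff) (metis One_nat_def Suc_1 card_gt_0_iff Suc_leI le_neq_implies_less)
  have uv: "u \<noteq> v" "u \<in> V" "v \<in> V" using u v by auto
  have "card (edge_label f {u,v}) = max (card (f u)) (card (f v))"
    using assms(2) P_memI[OF uv(2,3,1)] unfolding is_WIASI_def by blast
  moreover have "card (f u) < card (sums (f u) (f v))" using sums_gt cu cv fin uv by blast
  moreover have "card (f v) < card (sums (f u) (f v))" using sums_gt cu cv fin uv sums_comm by metis
  ultimately show False using edge_label_pair[OF uv(1)] by simp
qed

lemma sums_sing1: "sums A {b} = (\<lambda>a. a + b) ` A" unfolding sums_def by auto
lemma sums_sing2: "sums {a} B = (\<lambda>b. a + b) ` B" unfolding sums_def by auto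

lemma construction:
  assumes "finite V" "w \<in> V"
  shows "\<exists>f. is_WIASI V (P V) f \<and> mono_edges (P V) f = (card V - 1) choose 2"
proof -
  obtain g :: "_ \<Rightarrow> nat" where g: "inj_on g V" using finite_imp_inj_to_nat_seg[OF assms(1)] by blast
  define f where "f v = (if v = w then {0,1} else {(2::nat)^(g v + 1)})" for v
  have fin: "\<forall>v\<in>V. finite (f v) \<and> f v \<noteq> {}" unfolding f_def by auto
  have cf: "card (f v) = (if v = w then 2 else 1)" for v unfolding f_def by auto
  have S: "{v\<in>V. card (f v) = 1} = V - {w}" using cf by auto
  have L1: "edge_label f {u,v} = {2^(g u + 1) + 2^(g v + 1)}" if "u \<noteq> v" "u \<noteq> w" "v \<noteq> w" for u v
    using that by (simp add: edge_label_pair f_def sums_sing1)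
  have L2: "edge_label f {w,v} = {2^(g v + 1), 2^(g v + 1) + 1}" if "v \<noteq> w" for v
    using that by (simp add: edge_label_pair f_def sums_sing1 add.commute)
  have form: "(\<exists>v\<in>V. v \<noteq> w \<and> e = {w,v}) \<or> (\<exists>u v. u\<in>V \<and> v\<in>V \<and> u\<noteq>v \<and> u\<noteq>w \<and> v\<noteq>w \<and> e={u,v})"
    if he: "e \<in> P V" for e
  proof -
    have "\<exists>u v. e = {u,v} \<and> u \<in> V \<and> v \<in> V \<and> u \<noteq> v" using he unfolding P_def by (simp only: mem_Collect_eq)
    then obtain u v where uv: "e = {u,v}" "u \<in> V" "v \<in> V" "u \<noteq> v" by (elim exE conjE)
    show ?thesis
    proof (cases "u = w")
      case True
      then have "v \<in> V \<and> v \<noteq> w \<and> e = {w,v}" using uv by simp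
      then show ?thesis by (intro disjI1 bexI[of _ v]) simp_all
    next
      case False
      show ?thesis
      proof (cases "v = w")
        case True
        then have "e = {w, u}" using uv(1) by (simp add: insert_commute)
        then have "u \<in> V \<and> u \<noteq> w \<and> e = {w,u}" using uv False by simp
        then show ?thesis by (intro disjI1 bexI[of _ u]) simp_all
      next
        case F2: False
        then have "u\<in>V \<and> v\<in>V \<and> u\<noteq>v \<and> u\<noteq>w \<and> v\<noteq>w \<and> e={u,v}" using uv False by simp
        then show ?thesis by (intro disjI2 exI[of _ u] exI[of _ v])
      qed
    qed
  qed
  have injf: "inj_on f V"
  proof (rule inj_onI)
    fix x y assume xy: "x \<in> V" "y \<in> V" "f x = f y"
    show "x = y"
    proof (cases "x = w \<or> y = w")
      case True then show ?thesis using xy(3) cf by (metis numeral_One numeral_eq_iff semiring_norm(85))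
    next
      case False then have "g x = g y" using xy(3) unfolding f_def by (simp add: power_inject_exp)
      then show ?thesis using g xy inj_onD by metis
    qed
  qed
  have inje: "inj_on (edge_label f) (P V)"
  proof (rule inj_onI)
    fix e1 e2 assume e: "e1 \<in> P V" "e2 \<in> P V" "edge_label f e1 = edge_label f e2"
    show "e1 = e2"
      using form[OF e(1)] form[OF e(2)]
    proof (elim disjE bexE exE conjE)
      fix v1 v2 assume "v1 \<in> V" "v1 \<noteq> w" "e1 = {w, v1}" "v2 \<in> V" "v2 \<noteq> w" "e2 = {w, v2}"
      then have "g v1 = g v2" using e(3) L2 by (auto simp: doubleton_eq_iff power_inject_exp)
      then show ?thesis using g \<open>v1 \<in> V\<close> \<open>v2 \<in> V\<close> \<open>e1 = {w, v1}\<close> \<open>e2 = {w, v2}\<close> inj_onD by metis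
    next
      fix v1 u2 v2 assume "v1 \<noteq> w" "e1 = {w, v1}" "u2 \<noteq> v2" "u2 \<noteq> w" "v2 \<noteq> w" "e2 = {u2, v2}"
      then show ?thesis using e(3) L1 L2 by (auto simp: doubleton_eq_iff)
    next
      fix u1 v1 v2 assume "v2 \<noteq> w" "e2 = {w, v2}" "u1 \<noteq> v1" "u1 \<noteq> w" "v1 \<noteq> w" "e1 = {u1, v1}"
      then show ?thesis using e(3) L1 L2 by (auto simp: doubleton_eq_iff)
    next
      fix u1 v1 u2 v2 assume h: "u1 \<in> V" "v1 \<in> V" "u1 \<noteq> v1" "u1 \<noteq> w" "v1 \<noteq> w" "e1 = {u1, v1}"
        "u2 \<in> V" "v2 \<in> V" "u2 \<noteq> v2" "u2 \<noteq> w" "v2 \<noteq> w" "e2 = {u2, v2}"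
      have n1: "g u1 + 1 \<noteq> g v1 + 1" using h g inj_onD by fastforce
      have n2: "g u2 + 1 \<noteq> g v2 + 1" using h g inj_onD by fastforce
      have "(2::nat)^(g u1 + 1) + 2^(g v1 + 1) = 2^(g u2 + 1) + 2^(g v2 + 1)"
        using e(3) h L1 by simp
      then have "{g u1 + 1, g v1 + 1} = {g u2 + 1, g v2 + 1}" using pow2_sidon n1 n2 by blast
      then have "{g u1, g v1} = {g u2, g v2}" by (auto simp: doubleton_eq_iff)
      then have "g ` {u1,v1} = g ` {u2,v2}" by simp
      moreover have "{u1,v1} \<subseteq> V" "{u2,v2} \<subseteq> V" using h by simp_all
      ultimately have "{u1,v1} = {u2,v2}" using inj_on_image_eq_iff[OF g] by metis
      then show ?thesis using h by simp
    qed
  qed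
  have w: "\<forall>u v. {u, v} \<in> P V \<longrightarrow> card (edge_label f {u, v}) = max (card (f u)) (card (f v))"
  proof (intro allI impI)
    fix u v assume "{u,v} \<in> P V"
    then have uv: "u \<in> V" "v \<in> V" "u \<noteq> v" using P_mem by metis+
    show "card (edge_label f {u, v}) = max (card (f u)) (card (f v))"
    proof (cases "u = w")
      case True then show ?thesis using uv L2 cf by simp
    next
      case False
      show ?thesis
      proof (cases "v = w")
        case True then show ?thesis using uv L2[of u] cf False by (simp add: insert_commute)
      next
        case F2: False then show ?thesis using uv L1 cf False by simp
      qed
    qed
  qed
  have "is_WIASI V (P V) f" unfolding is_WIASI_def is_IASI_def using fin injf inje w by blast
  moreover have "mono_edges (P V) f = (card V - 1) choose 2"
    using mono_edges_P[OF assms(1) fin] S assms by simp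
  ultimately show ?thesis by blast
qed

lemma complete_sparing:
  assumes "finite V" "V \<noteq> {}"
  shows "sparing_number V (P V) = (card V - 1) choose 2"
proof -
  let ?M = "{mono_edges (P V) f | f. is_WIASI V (P V) f}"
  obtain w where "w \<in> V" using assms by blast
  obtain f0 where f0: "is_WIASI V (P V) f0" "mono_edges (P V) f0 = (card V - 1) choose 2"
    using construction[OF assms(1) \<open>w \<in> V\<close>] by blast
  have mem: "(card V - 1) choose 2 \<in> ?M" using f0 by (metis (mono_tags, lifting) mem_Collect_eq)
  have lb: "\<forall>y\<in>?M. (card V - 1) choose 2 \<le> y"
  proof
    fix y assume "y \<in> ?M"
    then obtain f where f: "is_WIASI V (P V) f" "y = mono_edges (P V) f" by blast
    have fin: "\<forall>v\<in>V. finite (f v) \<and> f v \<noteq> {}" using f(1) unfolding is_WIASI_def is_IASI_def by blast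
    show "(card V - 1) choose 2 \<le> y" using f mono_edges_P[OF assms(1) fin] WIASI_lower[OF assms(1) f(1)] choose2_mono by simp
  qed
  have "?M \<subseteq> {..card (P V)}"
    unfolding mono_edges_def using finite_P[OF assms(1)] by (auto intro!: card_mono)
  then have "finite ?M" using finite_subset by blast
  then show ?thesis unfolding sparing_number_def using mem lb by (intro Min_eqI) auto
qed

lemma reach_mono: "reach E m u v \<Longrightarrow> m \<le> m' \<Longrightarrow> reach E m' u v"
proof (induction m' rule: nat_induct)
  case 0 then show ?case by simp
next
  case (Suc m')
  show ?case
  proof (cases "m = Suc m'")
    case True then show ?thesis using Suc.prems by simp
  next
    case False then have "reach E m' u v" using Suc by simp
    then show ?thesis by simp
  qed
qed

lemma hub_edge:
  assumes "x \<in> windmill_V n k" "x \<noteq> (0,0)"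
  shows "{(0,0), x} \<in> windmill_E n k"
proof -
  obtain i j where x: "x = (i,j)" "i \<in> {1..k}" "j \<in> {1..n-1}" using assms unfolding windmill_V_def by auto
  show ?thesis unfolding windmill_E_def using x assms(2)
    by (intro CollectI exI[of _ "(0,0)"] exI[of _ x] exI[of _ i]) auto
qed

lemma reach2:
  assumes "u \<in> windmill_V n k" "v \<in> windmill_V n k"
  shows "reach (windmill_E n k) 2 u v"
proof -
  let ?E = "windmill_E n k"
  have r1: "reach ?E (Suc 0) u (0,0)"
  proof (cases "u = (0,0)")
    case True then show ?thesis by simp
  next
    case False
    have "{u, (0,0)} \<in> ?E" using hub_edge[OF assms(1) False] by (simp add: insert_commute)
    then show ?thesis by auto
  qed
  have "reach ?E (Suc (Suc 0)) u v"
  proof (cases "v = (0,0)")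
    case True then show ?thesis using r1 by (simp only: reach.simps(2)) blast
  next
    case False
    have "{(0,0), v} \<in> ?E" using hub_edge[OF assms(2) False] .
    then show ?thesis using r1 by (simp only: reach.simps(2)) blast
  qed
  then show ?thesis by (simp only: numeral_2_eq_2)
qed

lemma power_windmill:
  assumes "r \<ge> 2"
  shows "power_edges (windmill_V n k) (windmill_E n k) r = P (windmill_V n k)"
proof -
  have "\<And>u v. u \<in> windmill_V n k \<Longrightarrow> v \<in> windmill_V n k \<Longrightarrow> reach (windmill_E n k) r u v"
    using reach2 reach_mono assms by metis
  then show ?thesis unfolding power_edges_def P_def by blast
qed

lemma windmill_card: "finite (windmill_V n k)" "card (windmill_V n k) = k * (n - 1) + 1"
proof -
  have "(0,0) \<notin> {1..k} \<times> {1..n - 1}" by simp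
  moreover have "finite ({1..k} \<times> {1..n - 1})" by simp
  ultimately show "finite (windmill_V n k)" "card (windmill_V n k) = k * (n - 1) + 1"
    unfolding windmill_V_def by (simp_all add: card_cartesian_product)
qed

theorem mainTheorem8:
  fixes n k r :: nat
  assumes "n \<ge> 2" and "k \<ge> 2" and "r \<ge> 2"
  shows "sparing_number (windmill_V n k) (power_edges (windmill_V n k) (windmill_E n k) r)
         = k * (n - 1) * (k * (n - 1) - 1) div 2"
proof -
  have ne: "windmill_V n k \<noteq> {}" unfolding windmill_V_def by simp
  show ?thesis
    using complete_sparing[OF windmill_card(1) ne] power_windmill[OF assms(3)] windmill_card(2)
    by (simp add: choose_two)
qed

end
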